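(* Let $f, g: A \to B$ be maps of $\mathbf{PR}$. If $\mathbf{PR}$ derives the equation $\mathrm{true}_A = \;\doteq_B \circ (f \times g)\circ \Delta_A : A \to \mathbb{N}$ (in free variables: $[f(a) \doteq_B g(a)] = \mathrm{true}_A$), then $\mathbf{PR}$ derives $f = g: A \to B$.
   Context: $\mathbf{PR}$ is the formal (syntactic) category defined as follows. Objects: generated from a terminal object $\mathbb{1}$ and a natural numbers object $\mathbb{N}$ by binary products $A \times B$. Maps: generated from the constants $0: \mathbb{1} \to \mathbb{N}$, $\mathrm{s}: \mathbb{N}\to\mathbb{N}$, identities, terminal maps $\Pi_A: A \to \mathbb{1}$, projections $\ell, \mathrm{r}$, by composition, induced maps $(f,g)$ and iteration $f \mapsto f^\S: A\times\mathbb{N}\to A$ of endomaps; map equality is the least congruence containing the category axioms, uniqueness of maps into $\mathbb{1}$, $\ell\circ(f,g)=f$, $\mathrm{r}\circ(f,g)=g$, $(\ell h,\mathrm{r} h)=h$, the iteration equations $f^\S(a,0)=a$, $f^\S(a,\mathrm{s}n)=f(f^\S(a,n))$, and Freyd's uniqueness rule for initialised iterates ($h(a,0)=f(a)$, $h(a,\mathrm{s}n)=g(h(a,n))$ imply $h = g^\S\circ(f\times\mathbb{N})$). $f\times g := (f\ell, g\mathrm{r})$, $\Delta_A := (\mathrm{id}_A,\mathrm{id}_A)$. Arithmetic on $\mathbb{N}$ (all defined in $\mathbf{PR}$ by iteration/primitive recursion): $\mathrm{true}=1=\mathrm{s}\circ 0$, $\mathrm{false}=0$, $\mathrm{true}_A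 = 1 \circ \Pi_A$; predecessor with $\mathrm{pred}(0)=0$, $\mathrm{pred}(\mathrm{s}n)=n$; truncated subtraction $a \dot- 0 = a$, $a \dot- \mathrm{s}n = \mathrm{pred}(a\dot- n)$; multiplication; $\neg 0 = 1$, $\neg \mathrm{s}n = 0$; $\mathrm{sign} = \neg\neg$; $x \wedge y = \mathrm{sign}(x\cdot y)$; $[m\le n] = \neg(m\dot- n)$; $[m \doteq n] = [m\le n]\wedge[n\le m]$. Equality predicates $\doteq_B: B\times B\to\mathbb{N}$ on other objects: $\doteq_{\mathbb{1}} = \mathrm{true}$, and componentwise on products: $[(a,b)\doteq_{A\times B}(a',b')] = [a\doteq_A a']\wedge[b\doteq_B b']$. *)

theory Defs
  imports Main
begin

datatype obj = One | NN | Prod obj obj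

datatype mor =
    Id obj
  | Comp mor mor          \<comment> \<open>Comp g f = g \<circ> f\<close>
  | Term obj
  | Zero
  | Succ
  | L obj obj
  | R obj obj
  | Pair mor mor
  | Iter mor

inductive typed :: "mor \<Rightarrow> obj \<Rightarrow> obj \<Rightarrow> bool" where
  t_id: "typed (Id A) A A"
| t_comp: "typed f A B \<Longrightarrow> typed g B C \<Longrightarrow> typed (Comp g f) A C"
| t_term: "typed (Term A) A One"
| t_zero: "typed Zero One NN"
| t_succ: "typed Succ NN NN"
| t_l: "typed (L A B) (Prod A B) A"
| t_r: "typed (R A B) (Prod A B) B"
| t_pair: "typed f A B \<Longrightarrow> typed g A C \<Longrightarrow> typed (Pair f g) A (Prod B C)"
| t_iter: "typed f A A \<Longrightarrow> typed (Iter f) (Prod A NN) A"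

inductive eqv :: "mor \<Rightarrow> mor \<Rightarrow> obj \<Rightarrow> obj \<Rightarrow> bool" where
  e_refl: "typed f A B \<Longrightarrow> eqv f f A B"
| e_sym: "eqv f g A B \<Longrightarrow> eqv g f A B"
| e_trans: "eqv f g A B \<Longrightarrow> eqv g h A B \<Longrightarrow> eqv f h A B"
| e_comp: "eqv f f' A B \<Longrightarrow> eqv g g' B C \<Longrightarrow> eqv (Comp g f) (Comp g' f') A C"
| e_pair: "eqv f f' A B \<Longrightarrow> eqv g g' A C \<Longrightarrow> eqv (Pair f g) (Pair f' g') A (Prod B C)"
| e_iter: "eqv f f' A A \<Longrightarrow> eqv (Iter f) (Iter f') (Prod A NN) A"
| e_assoc: "typed f A B \<Longrightarrow> typed g B C \<Longrightarrow> typed h C D \<Longrightarrow>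
            eqv (Comp h (Comp g f)) (Comp (Comp h g) f) A D"
| e_idl: "typed f A B \<Longrightarrow> eqv (Comp (Id B) f) f A B"
| e_idr: "typed f A B \<Longrightarrow> eqv (Comp f (Id A)) f A B"
| e_term: "typed f A One \<Longrightarrow> eqv f (Term A) A One"
| e_projl: "typed f A B \<Longrightarrow> typed g A C \<Longrightarrow> eqv (Comp (L B C) (Pair f g)) f A B"
| e_projr: "typed f A B \<Longrightarrow> typed g A C \<Longrightarrow> eqv (Comp (R B C) (Pair f g)) g A C"
| e_surj: "typed h A (Prod B C) \<Longrightarrow>
           eqv (Pair (Comp (L B C) h) (Comp (R B C) h)) h A (Prod B C)"
| e_iter0: "typed f A A \<Longrightarrow>
            eqv (Comp (Iter f) (Pair (Id A) (Comp Zero (Term A)))) (Id A) A A"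
| e_iterS: "typed f A A \<Longrightarrow>
            eqv (Comp (Iter f) (Pair (L A NN) (Comp Succ (R A NN)))) (Comp f (Iter f)) (Prod A NN) A"
| e_freyd: "typed h (Prod A NN) B \<Longrightarrow> typed f A B \<Longrightarrow> typed g B B \<Longrightarrow>
            eqv (Comp h (Pair (Id A) (Comp Zero (Term A)))) f A B \<Longrightarrow>
            eqv (Comp h (Pair (L A NN) (Comp Succ (R A NN)))) (Comp g h) (Prod A NN) B \<Longrightarrow>
            eqv h (Comp (Iter g) (Pair (Comp f (L A NN)) (Comp (Id NN) (R A NN)))) (Prod A NN) B"

definition times :: "mor \<Rightarrow> mor \<Rightarrow> obj \<Rightarrow> obj \<Rightarrow> mor" where
  "times f g A B = Pair (Comp f (L A B)) (Comp g (R A B))"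

definition Delta :: "obj \<Rightarrow> mor" where
  "Delta A = Pair (Id A) (Id A)"

definition one :: mor where "one = Comp Succ Zero"

definition trueA :: "obj \<Rightarrow> mor" where
  "trueA A = Comp one (Term A)"

text \<open>pred n: iterate (a,b) \<mapsto> (b, s b) from (0,0) n times, take left component.\<close>
definition predm :: mor where
  "predm = Comp (L NN NN)
     (Comp (Iter (Pair (R NN NN) (Comp Succ (R NN NN))))
       (Pair (Comp (Pair Zero Zero) (Term NN)) (Id NN)))"

definition monus :: mor where "monus = Iter predm"

definition addm :: mor where "addm = Iter Succ"

text \<open>multiplication: iterate (a,acc) \<mapsto> (a, acc + a) from (a,0) n times.\<close>
definition multm :: mor where
  "multm = Comp (R NN NN)
     (Comp (Iter (Pair (L NN NN) (Comp addm (Pair (R NN NN) (L NN NN)))))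
       (Pair (Pair (L NN NN) (Comp Zero (Term (Prod NN NN)))) (R NN NN)))"

text \<open>negation: \<not>0 = 1, \<not>(s n) = 0.\<close>
definition negm :: mor where
  "negm = Comp (Iter (Comp Zero (Term NN))) (Pair (Comp one (Term NN)) (Id NN))"

definition signm :: mor where "signm = Comp negm negm"

definition andm :: mor where "andm = Comp signm multm"

definition leqm :: mor where "leqm = Comp negm monus"

definition eqNm :: mor where
  "eqNm = Comp andm (Pair leqm (Comp leqm (Pair (R NN NN) (L NN NN))))"

fun eqpred :: "obj \<Rightarrow> mor" where
  "eqpred One = trueA (Prod One One)"
| "eqpred NN = eqNm"
| "eqpred (Prod A B) =
     Comp andm
       (Pair (Comp (eqpred A) (Pair (Comp (L A B) (L (Prod A B) (Prod A B)))
                                    (Comp (L A B) (R (Prod A B) (Prod A B)))))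
             (Comp (eqpred B) (Pair (Comp (R A B) (L (Prod A B) (Prod A B)))
                                    (Comp (R A B) (R (Prod A B) (Prod A B))))))"

end

theory Submission
  imports Defs
begin


fun dm :: "mor \<Rightarrow> obj" and cd :: "mor \<Rightarrow> obj" where
  "dm (Id A) = A" | "cd (Id A) = A"
| "dm (Comp g f) = dm f" | "cd (Comp g f) = cd g"
| "dm (Term A) = A" | "cd (Term A) = One"
| "dm Zero = One" | "cd Zero = NN"
| "dm Succ = NN" | "cd Succ = NN"
| "dm (L A B) = Prod A B" | "cd (L A B) = A"
| "dm (R A B) = Prod A B" | "cd (R A B) = B"
| "dm (Pair f g) = dm f" | "cd (Pair f g) = Prod (cd f) (cd g)"
| "dm (Iter f) = Prod (dm f) NN" | "cd (Iter f) = dm f"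

fun wt :: "mor \<Rightarrow> bool" where
  "wt (Comp g f) = (wt f \<and> wt g \<and> cd f = dm g)"
| "wt (Pair f g) = (wt f \<and> wt g \<and> dm f = dm g)"
| "wt (Iter f) = (wt f \<and> cd f = dm f)"
| "wt _ = True"

lemma typed_iff: "typed f A B \<longleftrightarrow> wt f \<and> dm f = A \<and> cd f = B"
proof
  show "typed f A B \<Longrightarrow> wt f \<and> dm f = A \<and> cd f = B"
    by (induction rule: typed.induct) auto
  show "wt f \<and> dm f = A \<and> cd f = B \<Longrightarrow> typed f A B"
    by (induction f arbitrary: A B) (auto intro: typed.intros)
qed

lemma eqv_typed: "eqv f g A B \<Longrightarrow> typed f A B \<and> typed g A B"
  by (induction rule: eqv.induct) (auto intro: typed.intros)

definition rel :: "mor \<Rightarrow> mor \<Rightarrow> bool" where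
  "rel f g \<longleftrightarrow> dm f = dm g \<and> cd f = cd g \<and> wt f = wt g \<and> (wt f \<longrightarrow> eqv f g (dm f) (cd f))"

lemma equivp_rel: "equivp rel"
proof (rule equivpI)
  show "reflp rel" unfolding reflp_def rel_def by (auto intro: e_refl simp: typed_iff)
  show "symp rel" unfolding symp_def rel_def by (auto intro: e_sym)
  show "transp rel" unfolding transp_def rel_def by (auto intro: e_trans)
qed

quotient_type pm = mor / rel by (rule equivp_rel)

lift_definition Idp :: "obj \<Rightarrow> pm" is Id .
lift_definition Cmp :: "pm \<Rightarrow> pm \<Rightarrow> pm" is Comp
  unfolding rel_def by (auto intro: e_comp)
lift_definition Trm :: "obj \<Rightarrow> pm" is Term .
lift_definition Zr :: "pm" is Zero .
lift_definition Sc :: "pm" is Succ .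
lift_definition Lp :: "obj \<Rightarrow> obj \<Rightarrow> pm" is L .
lift_definition Rp :: "obj \<Rightarrow> obj \<Rightarrow> pm" is R .
lift_definition Pr :: "pm \<Rightarrow> pm \<Rightarrow> pm" is Pair
  unfolding rel_def by (auto intro: e_pair)
lift_definition It :: "pm \<Rightarrow> pm" is Iter
  unfolding rel_def by (auto intro: e_iter)
lift_definition pdom :: "pm \<Rightarrow> obj" is dm unfolding rel_def by auto
lift_definition pcod :: "pm \<Rightarrow> obj" is cd unfolding rel_def by auto
lift_definition pwt :: "pm \<Rightarrow> bool" is wt unfolding rel_def by auto

lemma pm_eq_iff: "abs_pm f = abs_pm g \<longleftrightarrow> rel f g"
  using Quotient3_rel[OF Quotient3_pm] equivp_reflp[OF equivp_rel] by blast

lemma ty_simps[simp]: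
  "pdom (Idp A) = A" "pcod (Idp A) = A" "pwt (Idp A)"
  "pdom (Cmp g f) = pdom f" "pcod (Cmp g f) = pcod g" "pwt (Cmp g f) = (pwt f \<and> pwt g \<and> pcod f = pdom g)"
  "pdom (Trm A) = A" "pcod (Trm A) = One" "pwt (Trm A)"
  "pdom Zr = One" "pcod Zr = NN" "pwt Zr"
  "pdom Sc = NN" "pcod Sc = NN" "pwt Sc"
  "pdom (Lp A B) = Prod A B" "pcod (Lp A B) = A" "pwt (Lp A B)"
  "pdom (Rp A B) = Prod A B" "pcod (Rp A B) = B" "pwt (Rp A B)"
  "pdom (Pr f g) = pdom f" "pcod (Pr f g) = Prod (pcod f) (pcod g)" "pwt (Pr f g) = (pwt f \<and> pwt g \<and> pdom f = pdom g)"
  "pdom (It f) = Prod (pdom f) NN" "pcod (It f) = pdom f" "pwt (It f) = (pwt f \<and> pcod f = pdom f)"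
  by (transfer, simp)+

lemma relI: "wt f \<Longrightarrow> eqv f g (dm f) (cd f) \<Longrightarrow> rel f g"
  unfolding rel_def using eqv_typed typed_iff by metis

lemma n_assoc: "pwt (Cmp (Cmp h g) f) \<Longrightarrow> Cmp (Cmp h g) f = Cmp h (Cmp g f)"
  by transfer (auto intro!: relI e_sym[OF e_assoc] simp: typed_iff)
lemma n_idl: "pwt (Cmp (Idp B) f) \<Longrightarrow> Cmp (Idp B) f = f"
  by transfer (auto intro!: relI e_idl simp: typed_iff)
lemma n_idr: "pwt (Cmp f (Idp A)) \<Longrightarrow> Cmp f (Idp A) = f"
  by transfer (auto intro!: relI e_idr simp: typed_iff)
lemma n_trm: "pwt f \<Longrightarrow> pcod f = One \<Longrightarrow> f = Trm (pdom f)"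
  by transfer (auto intro!: relI e_term simp: typed_iff)
lemma n_trmc: "pwt (Cmp (Trm B) f) \<Longrightarrow> Cmp (Trm B) f = Trm (pdom f)"
  using n_trm[of "Cmp (Trm B) f"] by simp
lemma n_projl: "pwt (Cmp (Lp A B) (Pr f g)) \<Longrightarrow> Cmp (Lp A B) (Pr f g) = f"
  by transfer (auto intro!: relI e_projl simp: typed_iff)
lemma n_projr: "pwt (Cmp (Rp A B) (Pr f g)) \<Longrightarrow> Cmp (Rp A B) (Pr f g) = g"
  by transfer (auto intro!: relI e_projr simp: typed_iff)
lemma n_surj: "pwt h \<Longrightarrow> pcod h = Prod A B \<Longrightarrow> Pr (Cmp (Lp A B) h) (Cmp (Rp A B) h) = h"
  by transfer (auto intro!: relI e_surj simp: typed_iff)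
lemma n_surjc: "pwt (Pr (Cmp (Lp A B) h) (Cmp (Rp A B) h)) \<Longrightarrow> Pr (Cmp (Lp A B) h) (Cmp (Rp A B) h) = h"
  by (rule n_surj) auto
lemma n_surjid: "Pr (Lp A B) (Rp A B) = Idp (Prod A B)"
  using n_surj[of "Idp (Prod A B)" A B] n_idr[of "Lp A B"] n_idr[of "Rp A B"] by simp
lemma n_prc: "pwt (Cmp (Pr f g) h) \<Longrightarrow> Cmp (Pr f g) h = Pr (Cmp f h) (Cmp g h)"
proof -
  assume a: "pwt (Cmp (Pr f g) h)"
  have "Pr (Cmp f h) (Cmp g h) = Pr (Cmp (Lp (pcod f) (pcod g)) (Cmp (Pr f g) h)) (Cmp (Rp (pcod f) (pcod g)) (Cmp (Pr f g) h))"
    using a by (simp add: n_assoc[symmetric] n_projl n_projr)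
  also have "\<dots> = Cmp (Pr f g) h" using a by (intro n_surj) auto
  finally show ?thesis by simp
qed
lemma n_iter0: "pwt f \<Longrightarrow> pcod f = pdom f \<Longrightarrow> Cmp (It f) (Pr (Idp (pdom f)) (Cmp Zr (Trm (pdom f)))) = Idp (pdom f)"
  by transfer (auto intro!: relI e_iter0 simp: typed_iff)
lemma n_iterS: "pwt f \<Longrightarrow> pcod f = pdom f \<Longrightarrow> A = pdom f \<Longrightarrow>
   Cmp (It f) (Pr (Lp A NN) (Cmp Sc (Rp A NN))) = Cmp f (It f)"
  by transfer (auto intro!: relI e_iterS simp: typed_iff)
lemma n_freyd: "pwt h \<Longrightarrow> pdom h = Prod A NN \<Longrightarrow> pcod h = B \<Longrightarrow>
   pwt f \<Longrightarrow> pdom f = A \<Longrightarrow> pcod f = B \<Longrightarrow> pwt g \<Longrightarrow> pdom g = B \<Longrightarrow> pcod g = B \<Longrightarrow>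
   Cmp h (Pr (Idp A) (Cmp Zr (Trm A))) = f \<Longrightarrow>
   Cmp h (Pr (Lp A NN) (Cmp Sc (Rp A NN))) = Cmp g h \<Longrightarrow>
   h = Cmp (It g) (Pr (Cmp f (Lp A NN)) (Cmp (Idp NN) (Rp A NN)))"
  apply transfer
  apply (simp add: rel_def)
  apply (rule e_freyd)
  apply (auto simp: typed_iff)
  done




lemma m_assoc: "pwt f \<Longrightarrow> pwt g \<Longrightarrow> pwt h \<Longrightarrow> pcod f = pdom g \<Longrightarrow> pcod g = pdom h \<Longrightarrow> Cmp (Cmp h g) f = Cmp h (Cmp g f)"
  by (rule n_assoc) simp
lemma m_idl: "pwt f \<Longrightarrow> pcod f = B \<Longrightarrow> Cmp (Idp B) f = f" by (rule n_idl) simp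
lemma m_idr: "pwt f \<Longrightarrow> pdom f = A \<Longrightarrow> Cmp f (Idp A) = f" by (rule n_idr) simp
lemma m_trmc: "pwt f \<Longrightarrow> pcod f = B \<Longrightarrow> Cmp (Trm B) f = Trm (pdom f)" by (rule n_trmc) simp
lemma m_projl: "pwt f \<Longrightarrow> pwt g \<Longrightarrow> pdom f = pdom g \<Longrightarrow> pcod f = A \<Longrightarrow> pcod g = B \<Longrightarrow> Cmp (Lp A B) (Pr f g) = f"
  by (rule n_projl) simp
lemma m_projr: "pwt f \<Longrightarrow> pwt g \<Longrightarrow> pdom f = pdom g \<Longrightarrow> pcod f = A \<Longrightarrow> pcod g = B \<Longrightarrow> Cmp (Rp A B) (Pr f g) = g"
  by (rule n_projr) simp
lemma m_surjc: "pwt h \<Longrightarrow> pcod h = Prod A B \<Longrightarrow> Pr (Cmp (Lp A B) h) (Cmp (Rp A B) h) = h"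
  by (rule n_surj)
lemma m_prc: "pwt f \<Longrightarrow> pwt g \<Longrightarrow> pwt h \<Longrightarrow> pdom f = pdom g \<Longrightarrow> pcod h = pdom f \<Longrightarrow> Cmp (Pr f g) h = Pr (Cmp f h) (Cmp g h)"
  by (rule n_prc) simp
lemmas nrm = m_assoc m_idl m_idr m_trmc m_projl m_projr m_surjc n_surjid m_prc

abbreviation Z :: "obj \<Rightarrow> pm" where "Z G \<equiv> Cmp Zr (Trm G)"
abbreviation S :: "pm \<Rightarrow> pm" where "S x \<equiv> Cmp Sc x"
abbreviation hom :: "pm \<Rightarrow> obj \<Rightarrow> obj \<Rightarrow> bool" where "hom f A B \<equiv> pwt f \<and> pdom f = A \<and> pcod f = B"

lemma it0: "pwt f \<Longrightarrow> pcod f = pdom f \<Longrightarrow> hom a G (pdom f) \<Longrightarrow> Cmp (It f) (Pr a (Z G)) = a"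
proof -
  assume a: "pwt f" "pcod f = pdom f" "hom a G (pdom f)"
  have "Cmp (It f) (Pr a (Z G)) = Cmp (Cmp (It f) (Pr (Idp (pdom f)) (Z (pdom f)))) a"
    using a by (simp add: nrm)
  also have "\<dots> = a" using a by (simp add: n_iter0 nrm)
  finally show ?thesis .
qed

lemma itS: "pwt f \<Longrightarrow> pcod f = pdom f \<Longrightarrow> hom a G (pdom f) \<Longrightarrow> hom n G NN \<Longrightarrow>
   Cmp (It f) (Pr a (S n)) = Cmp f (Cmp (It f) (Pr a n))"
proof -
  assume a: "pwt f" "pcod f = pdom f" "hom a G (pdom f)" "hom n G NN"
  have "Cmp (It f) (Pr a (S n)) = Cmp (Cmp (It f) (Pr (Lp (pdom f) NN) (S (Rp (pdom f) NN)))) (Pr a n)"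
    using a by (simp add: nrm)
  also have "\<dots> = Cmp f (Cmp (It f) (Pr a n))" using a by (simp add: n_iterS nrm)
  finally show ?thesis .
qed



lemma ind:
  assumes H: "hom H (Prod G NN) B" and K: "hom K (Prod G NN) B" and St: "hom St (Prod (Prod G NN) B) B"
  and base: "Cmp H (Pr (Idp G) (Z G)) = Cmp K (Pr (Idp G) (Z G))"
  and sH: "Cmp H (Pr (Lp G NN) (S (Rp G NN))) = Cmp St (Pr (Idp (Prod G NN)) H)"
  and sK: "Cmp K (Pr (Lp G NN) (S (Rp G NN))) = Cmp St (Pr (Idp (Prod G NN)) K)"
  shows "H = K"
proof -
  define g where "g = Pr (Pr (Cmp (Lp G NN) (Lp (Prod G NN) B)) (S (Cmp (Rp G NN) (Lp (Prod G NN) B)))) St"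
  define f where "f = Cmp (Pr (Idp (Prod G NN)) H) (Pr (Idp G) (Z G))"
  have "Pr (Idp (Prod G NN)) H = Cmp (It g) (Pr (Cmp f (Lp G NN)) (Cmp (Idp NN) (Rp G NN)))"
    apply (rule n_freyd[where B="Prod (Prod G NN) B"])
    using H K St apply (simp_all add: g_def f_def)
    using sH H K St by (simp add: nrm)
  moreover have "Pr (Idp (Prod G NN)) K = Cmp (It g) (Pr (Cmp f (Lp G NN)) (Cmp (Idp NN) (Rp G NN)))"
    apply (rule n_freyd[where B="Prod (Prod G NN) B"])
    using H K St apply (simp_all add: g_def f_def)
    using base H K apply (simp add: nrm)
    using sK H K St by (simp add: nrm)
  ultimately have "Pr (Idp (Prod G NN)) H = Pr (Idp (Prod G NN)) K" by simp
  hence "Cmp (Rp (Prod G NN) B) (Pr (Idp (Prod G NN)) H) = Cmp (Rp (Prod G NN) B) (Pr (Idp (Prod G NN)) K)" by simp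
  thus ?thesis using H K by (simp add: nrm)
qed



lemma cases_lem:
  assumes H: "hom H (Prod G NN) B" and K: "hom K (Prod G NN) B"
  and base: "Cmp H (Pr (Idp G) (Z G)) = Cmp K (Pr (Idp G) (Z G))"
  and st: "Cmp H (Pr (Lp G NN) (S (Rp G NN))) = Cmp K (Pr (Lp G NN) (S (Rp G NN)))"
  shows "H = K"
  apply (rule ind[OF H K _ base, where St="Cmp K (Pr (Cmp (Lp G NN) (Lp (Prod G NN) B)) (S (Cmp (Rp G NN) (Lp (Prod G NN) B))))"])
  using H K st by (simp_all add: nrm)

lemma cases2:
  assumes H: "hom H (Prod NN NN) B" and K: "hom K (Prod NN NN) B"
  and base: "Cmp H (Pr (Z NN) (Idp NN)) = Cmp K (Pr (Z NN) (Idp NN))"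
  and st: "Cmp H (Pr (S (Lp NN NN)) (Rp NN NN)) = Cmp K (Pr (S (Lp NN NN)) (Rp NN NN))"
  shows "H = K"
proof -
  let ?sw = "Pr (Rp NN NN) (Lp NN NN)"
  have st': "Cmp (Cmp H (Pr (S (Lp NN NN)) (Rp NN NN))) ?sw = Cmp (Cmp K (Pr (S (Lp NN NN)) (Rp NN NN))) ?sw"
    using st by simp
  have "Cmp H ?sw = Cmp K ?sw"
    apply (rule cases_lem[where G=NN and B=B])
    using H K base st' by (simp_all add: nrm)
  hence "Cmp (Cmp H ?sw) ?sw = Cmp (Cmp K ?sw) ?sw" by simp
  thus ?thesis using H K by (simp add: nrm)
qed

definition "phi = Pr (Rp NN NN) (S (Rp NN NN))"
definition "predp = Cmp (Lp NN NN) (Cmp (It phi) (Pr (Cmp (Pr Zr Zr) (Trm NN)) (Idp NN)))"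
definition "monp = It predp"
definition "addp = It Sc"
definition "psi = Pr (Lp NN NN) (Cmp addp (Pr (Rp NN NN) (Lp NN NN)))"
definition "multp = Cmp (Rp NN NN) (Cmp (It psi) (Pr (Pr (Lp NN NN) (Cmp Zr (Trm (Prod NN NN)))) (Rp NN NN)))"
definition "negp = Cmp (It (Cmp Zr (Trm NN))) (Pr (Cmp (Cmp Sc Zr) (Trm NN)) (Idp NN))"

lemma ty_c[simp]:
  "hom phi (Prod NN NN) (Prod NN NN)" "hom predp NN NN" "hom monp (Prod NN NN) NN" "hom addp (Prod NN NN) NN"
  "hom psi (Prod NN NN) (Prod NN NN)" "hom multp (Prod NN NN) NN" "hom negp NN NN"
  by (simp_all add: phi_def predp_def monp_def addp_def psi_def multp_def negp_def)

abbreviation P where "P x \<equiv> Cmp predp x"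
abbreviation Pl where "Pl x y \<equiv> Cmp addp (Pr x y)"
abbreviation Mn where "Mn x y \<equiv> Cmp monp (Pr x y)"
abbreviation Mu where "Mu x y \<equiv> Cmp multp (Pr x y)"
abbreviation Ng where "Ng x \<equiv> Cmp negp x"

lemma addZ: "hom x G NN \<Longrightarrow> Pl x (Z G) = x"
  unfolding addp_def by (rule it0) auto
lemma addS: "hom x G NN \<Longrightarrow> hom y G NN \<Longrightarrow> Pl x (S y) = S (Pl x y)"
  unfolding addp_def by (rule itS) auto
lemma monZ: "hom x G NN \<Longrightarrow> Mn x (Z G) = x"
  unfolding monp_def by (rule it0) auto
lemma monS: "hom x G NN \<Longrightarrow> hom y G NN \<Longrightarrow> Mn x (S y) = P (Mn x y)"
  unfolding monp_def by (rule itS) auto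

lemma predZ: "P (Z G) = Z G"
  unfolding predp_def by (simp add: nrm it0)

lemma phiR: "hom n G NN \<Longrightarrow> Cmp (Rp NN NN) (Cmp (It phi) (Pr (Pr (Z G) (Z G)) n)) = n"
proof -
  assume n: "hom n G NN"
  have "Cmp (Rp NN NN) (Cmp (It phi) (Pr (Pr (Z (Prod G NN)) (Z (Prod G NN))) (Rp G NN))) = Rp G NN"
    apply (rule ind[where G=G and B=NN and St="S (Rp (Prod G NN) NN)"])
    by (simp_all add: nrm it0 itS phi_def)
  hence "Cmp (Cmp (Rp NN NN) (Cmp (It phi) (Pr (Pr (Z (Prod G NN)) (Z (Prod G NN))) (Rp G NN)))) (Pr (Idp G) n)
     = Cmp (Rp G NN) (Pr (Idp G) n)" by simp
  thus ?thesis using n by (simp add: nrm)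
qed

lemma phi_app: "hom X G (Prod NN NN) \<Longrightarrow> Cmp phi X = Pr (Cmp (Rp NN NN) X) (S (Cmp (Rp NN NN) X))"
  unfolding phi_def by (simp add: nrm)

lemma predS: "hom n G NN \<Longrightarrow> P (S n) = n"
  unfolding predp_def by (simp add: nrm itS phiR phi_app)


lemma psi_app: "hom X G (Prod NN NN) \<Longrightarrow> Cmp psi X = Pr (Cmp (Lp NN NN) X) (Pl (Cmp (Rp NN NN) X) (Cmp (Lp NN NN) X))"
  unfolding psi_def by (simp add: nrm)

lemma psiL: "hom x G NN \<Longrightarrow> hom n G NN \<Longrightarrow> Cmp (Lp NN NN) (Cmp (It psi) (Pr (Pr x (Z G)) n)) = x"
proof -
  assume x: "hom x G NN" and n: "hom n G NN"
  have "Cmp (Lp NN NN) (Cmp (It psi) (Pr (Pr (Cmp x (Lp G NN)) (Z (Prod G NN))) (Rp G NN))) = Cmp x (Lp G NN)"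
    apply (rule ind[where G=G and B=NN and St="Rp (Prod G NN) NN"])
    using x by (simp_all add: nrm it0 itS psi_app)
  hence "Cmp (Cmp (Lp NN NN) (Cmp (It psi) (Pr (Pr (Cmp x (Lp G NN)) (Z (Prod G NN))) (Rp G NN)))) (Pr (Idp G) n)
     = Cmp (Cmp x (Lp G NN)) (Pr (Idp G) n)" by simp
  thus ?thesis using x n by (simp add: nrm)
qed

lemma mulZ: "hom x G NN \<Longrightarrow> Mu x (Z G) = Z G"
  unfolding multp_def by (simp add: nrm it0)
lemma mulS: "hom x G NN \<Longrightarrow> hom y G NN \<Longrightarrow> Mu x (S y) = Pl (Mu x y) x"
  unfolding multp_def by (simp add: nrm itS psi_app psiL)
lemma negZ: "Ng (Z G) = S (Z G)"
  unfolding negp_def by (simp add: nrm it0)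
lemma negS: "hom x G NN \<Longrightarrow> Ng (S x) = Z G"
  unfolding negp_def by (simp add: nrm itS)

lemmas ar = addZ addS monZ monS predZ predS mulZ mulS negZ negS

lemma zero_add: assumes "hom y G NN" shows "Pl (Z G) y = y"
proof -
  have "Pl (Z (Prod G NN)) (Rp G NN) = Rp G NN"
    apply (rule ind[where G=G and B=NN and St="S (Rp (Prod G NN) NN)"])
    by (simp_all add: nrm ar)
  hence "Cmp (Pl (Z (Prod G NN)) (Rp G NN)) (Pr (Idp G) y) = Cmp (Rp G NN) (Pr (Idp G) y)" by simp
  thus ?thesis using assms by (simp add: nrm)
qed

lemma succ_add: assumes "hom x G NN" "hom y G NN" shows "Pl (S x) y = S (Pl x y)"
proof -
  have "Pl (S (Cmp x (Lp G NN))) (Rp G NN) = S (Pl (Cmp x (Lp G NN)) (Rp G NN))"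
    apply (rule ind[where G=G and B=NN and St="S (Rp (Prod G NN) NN)"])
    using assms by (simp_all add: nrm ar)
  hence "Cmp (Pl (S (Cmp x (Lp G NN))) (Rp G NN)) (Pr (Idp G) y) = Cmp (S (Pl (Cmp x (Lp G NN)) (Rp G NN))) (Pr (Idp G) y)" by simp
  thus ?thesis using assms by (simp add: nrm)
qed

lemma add_assoc: assumes "hom x G NN" "hom y G NN" "hom z G NN" shows "Pl (Pl x y) z = Pl x (Pl y z)"
proof -
  have "Pl (Pl (Cmp x (Lp G NN)) (Cmp y (Lp G NN))) (Rp G NN) = Pl (Cmp x (Lp G NN)) (Pl (Cmp y (Lp G NN)) (Rp G NN))"
    apply (rule ind[where G=G and B=NN and St="S (Rp (Prod G NN) NN)"])
    using assms by (simp_all add: nrm ar)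
  hence "Cmp (Pl (Pl (Cmp x (Lp G NN)) (Cmp y (Lp G NN))) (Rp G NN)) (Pr (Idp G) z) = Cmp (Pl (Cmp x (Lp G NN)) (Pl (Cmp y (Lp G NN)) (Rp G NN))) (Pr (Idp G) z)" by simp
  thus ?thesis using assms by (simp add: nrm)
qed

lemma zero_mon: assumes "hom y G NN" shows "Mn (Z G) y = Z G"
proof -
  have "Mn (Z (Prod G NN)) (Rp G NN) = Z (Prod G NN)"
    apply (rule ind[where G=G and B=NN and St="P (Rp (Prod G NN) NN)"])
    by (simp_all add: nrm ar)
  hence "Cmp (Mn (Z (Prod G NN)) (Rp G NN)) (Pr (Idp G) y) = Cmp (Z (Prod G NN)) (Pr (Idp G) y)" by simp
  thus ?thesis using assms by (simp add: nrm)
qed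

lemma monSS: assumes "hom x G NN" "hom y G NN" shows "Mn (S x) (S y) = Mn x y"
proof -
  have "Mn (S (Cmp x (Lp G NN))) (S (Rp G NN)) = Mn (Cmp x (Lp G NN)) (Rp G NN)"
    apply (rule ind[where G=G and B=NN and St="P (Rp (Prod G NN) NN)"])
    using assms by (simp_all add: nrm ar)
  hence "Cmp (Mn (S (Cmp x (Lp G NN))) (S (Rp G NN))) (Pr (Idp G) y) = Cmp (Mn (Cmp x (Lp G NN)) (Rp G NN)) (Pr (Idp G) y)" by simp
  thus ?thesis using assms by (simp add: nrm)
qed

lemma mon_self: assumes "hom y G NN" shows "Mn y y = Z G"
proof -
  have "Mn (Rp G NN) (Rp G NN) = Z (Prod G NN)"
    apply (rule ind[where G=G and B=NN and St="Rp (Prod G NN) NN"])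
    by (simp_all add: nrm ar monSS del: monS)
  hence "Cmp (Mn (Rp G NN) (Rp G NN)) (Pr (Idp G) y) = Cmp (Z (Prod G NN)) (Pr (Idp G) y)" by simp
  thus ?thesis using assms by (simp add: nrm)
qed

lemma pred_neg: assumes "hom y G NN" shows "P (Ng y) = Z G"
proof -
  have "P (Ng (Rp G NN)) = Z (Prod G NN)"
    apply (rule cases_lem[where G=G and B=NN])
    by (simp_all add: nrm ar)
  hence "Cmp (P (Ng (Rp G NN))) (Pr (Idp G) y) = Cmp (Z (Prod G NN)) (Pr (Idp G) y)" by simp
  thus ?thesis using assms by (simp add: nrm)
qed

lemma spred: assumes "hom y G NN" shows "Pl y (Ng y) = S (P y)"
proof -
  have "Pl (Rp G NN) (Ng (Rp G NN)) = S (P (Rp G NN))"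
    apply (rule cases_lem[where G=G and B=NN])
    by (simp_all add: nrm ar zero_add)
  hence "Cmp (Pl (Rp G NN) (Ng (Rp G NN))) (Pr (Idp G) y) = Cmp (S (P (Rp G NN))) (Pr (Idp G) y)" by simp
  thus ?thesis using assms by (simp add: nrm)
qed

lemma one_mon: assumes "hom y G NN" shows "Mn (S (Z G)) y = Ng y"
proof -
  have "Mn (S (Z (Prod G NN))) (Rp G NN) = Ng (Rp G NN)"
    apply (rule ind[where G=G and B=NN and St="P (Rp (Prod G NN) NN)"])
    by (simp_all add: nrm ar pred_neg)
  hence "Cmp (Mn (S (Z (Prod G NN))) (Rp G NN)) (Pr (Idp G) y) = Cmp (Ng (Rp G NN)) (Pr (Idp G) y)" by simp
  thus ?thesis using assms by (simp add: nrm)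
qed

lemma zero_mul: assumes "hom y G NN" shows "Mu (Z G) y = Z G"
proof -
  have "Mu (Z (Prod G NN)) (Rp G NN) = Z (Prod G NN)"
    apply (rule ind[where G=G and B=NN and St="Rp (Prod G NN) NN"])
    by (simp_all add: nrm ar)
  hence "Cmp (Mu (Z (Prod G NN)) (Rp G NN)) (Pr (Idp G) y) = Cmp (Z (Prod G NN)) (Pr (Idp G) y)" by simp
  thus ?thesis using assms by (simp add: nrm)
qed

lemma one_mul: assumes "hom y G NN" shows "Mu (S (Z G)) y = y"
proof -
  have "Mu (S (Z (Prod G NN))) (Rp G NN) = Rp G NN"
    apply (rule ind[where G=G and B=NN and St="S (Rp (Prod G NN) NN)"])
    by (simp_all add: nrm ar)
  hence "Cmp (Mu (S (Z (Prod G NN))) (Rp G NN)) (Pr (Idp G) y) = Cmp (Rp G NN) (Pr (Idp G) y)" by simp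
  thus ?thesis using assms by (simp add: nrm)
qed

lemma mul_one: assumes "hom x G NN" shows "Mu x (S (Z G)) = x"
  using assms by (simp add: ar zero_add)



abbreviation Sg where "Sg x \<equiv> Ng (Ng x)"

lemma BM: assumes "hom w G NN" "hom q G NN"
  shows "Mu (Ng w) (Sg (Mu (Ng w) q)) = Sg (Mu (Ng w) q)"
proof -
  let ?q = "Cmp q (Lp G NN)" and ?w = "Rp G NN"
  have "Mu (Ng ?w) (Sg (Mu (Ng ?w) ?q)) = Sg (Mu (Ng ?w) ?q)"
    apply (rule cases_lem[where G=G and B=NN])
    using assms by (simp_all add: nrm ar one_mul zero_mul zero_add)
  hence "Cmp (Mu (Ng ?w) (Sg (Mu (Ng ?w) ?q))) (Pr (Idp G) w) = Cmp (Sg (Mu (Ng ?w) ?q)) (Pr (Idp G) w)" by simp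
  thus ?thesis using assms by (simp add: nrm)
qed

lemma NNN: assumes "hom w G NN" shows "Ng (Sg w) = Ng w"
proof -
  let ?w = "Rp G NN"
  have "Ng (Sg ?w) = Ng ?w"
    apply (rule cases_lem[where G=G and B=NN])
    using assms by (simp_all add: nrm ar)
  hence "Cmp (Ng (Sg ?w)) (Pr (Idp G) w) = Cmp (Ng ?w) (Pr (Idp G) w)" by simp
  thus ?thesis using assms by (simp add: nrm)
qed

lemma UU: assumes "hom w G NN" shows "Mu w (Sg w) = w"
proof -
  let ?w = "Rp G NN"
  have "Mu ?w (Sg ?w) = ?w"
    apply (rule cases_lem[where G=G and B=NN])
    using assms by (simp_all add: nrm ar zero_mul mul_one zero_add)
  hence "Cmp (Mu ?w (Sg ?w)) (Pr (Idp G) w) = Cmp ?w (Pr (Idp G) w)" by simp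
  thus ?thesis using assms by (simp add: nrm)
qed

lemma mon_pred: assumes "hom a G NN" "hom k G NN" shows "Mn (P a) k = P (Mn a k)"
proof -
  let ?a = "Cmp a (Lp G NN)" and ?k = "Rp G NN"
  have "Mn (P ?a) ?k = P (Mn ?a ?k)"
    apply (rule ind[where G=G and B=NN and St="P (Rp (Prod G NN) NN)"])
    using assms by (simp_all add: nrm ar)
  hence "Cmp (Mn (P ?a) ?k) (Pr (Idp G) k) = Cmp (P (Mn ?a ?k)) (Pr (Idp G) k)" by simp
  thus ?thesis using assms by (simp add: nrm)
qed

lemma INVs: assumes "hom a G NN" "hom k G NN" "hom b G NN"
  shows "Mu (Mn (Mn a (Sg b)) k) (Sg (Mn b (Sg a))) = Mu (Mu (P (Mn a k)) (Sg b)) (Sg (Mn b (Sg a)))"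
proof -
  let ?a = "Cmp a (Lp G NN)" and ?k = "Cmp k (Lp G NN)" and ?b = "Rp G NN"
  have "Mu (Mn (Mn ?a (Sg ?b)) ?k) (Sg (Mn ?b (Sg ?a))) = Mu (Mu (P (Mn ?a ?k)) (Sg ?b)) (Sg (Mn ?b (Sg ?a)))"
    apply (rule cases_lem[where G=G and B=NN])
    using assms by (simp_all add: nrm ar zero_mon mul_one mon_pred zero_add)
  hence "Cmp (Mu (Mn (Mn ?a (Sg ?b)) ?k) (Sg (Mn ?b (Sg ?a)))) (Pr (Idp G) b) = Cmp (Mu (Mu (P (Mn ?a ?k)) (Sg ?b)) (Sg (Mn ?b (Sg ?a)))) (Pr (Idp G) b)" by simp
  thus ?thesis using assms by (simp add: nrm)
qed

lemma INVz: assumes "hom a G NN" "hom b G NN"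
  shows "Mu (Mn a (Sg b)) (Sg (Mn b (Sg a))) = Mu (P (Mu a (Sg b))) (Sg (Mn b (Sg a)))"
proof -
  let ?a = "Cmp a (Lp G NN)" and ?b = "Rp G NN"
  have "Mu (Mn ?a (Sg ?b)) (Sg (Mn ?b (Sg ?a))) = Mu (P (Mu ?a (Sg ?b))) (Sg (Mn ?b (Sg ?a)))"
    apply (rule cases_lem[where G=G and B=NN])
    using assms by (simp_all add: nrm ar zero_mon mul_one zero_add)
  hence "Cmp (Mu (Mn ?a (Sg ?b)) (Sg (Mn ?b (Sg ?a)))) (Pr (Idp G) b) = Cmp (Mu (P (Mu ?a (Sg ?b))) (Sg (Mn ?b (Sg ?a)))) (Pr (Idp G) b)" by simp
  thus ?thesis using assms by (simp add: nrm)
qed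

lemma PMS: assumes "hom a G NN" "hom b G NN"
  shows "Mu (P a) (Sg b) = P (Mu a (Sg b))"
proof -
  let ?a = "Cmp a (Lp G NN)" and ?b = "Rp G NN"
  have "Mu (P ?a) (Sg ?b) = P (Mu ?a (Sg ?b))"
    apply (rule cases_lem[where G=G and B=NN])
    using assms by (simp_all add: nrm ar mul_one zero_add)
  hence "Cmp (Mu (P ?a) (Sg ?b)) (Pr (Idp G) b) = Cmp (P (Mu ?a (Sg ?b))) (Pr (Idp G) b)" by simp
  thus ?thesis using assms by (simp add: nrm)
qed

lemma INV: assumes "hom a G NN" "hom b G NN" "hom m G NN"
  shows "Mu (Mn (Mn a (Sg b)) (P m)) (Sg (Mn b (Sg a))) = Mu (Mn (Mu (Mn a m) (Sg b)) (Ng m)) (Sg (Mn b (Sg a)))"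
proof -
  let ?a = "Cmp a (Lp G NN)" and ?b = "Cmp b (Lp G NN)" and ?m = "Rp G NN"
  have "Mu (Mn (Mn ?a (Sg ?b)) (P ?m)) (Sg (Mn ?b (Sg ?a))) = Mu (Mn (Mu (Mn ?a ?m) (Sg ?b)) (Ng ?m)) (Sg (Mn ?b (Sg ?a)))"
    apply (rule cases_lem[where G=G and B=NN])
    using assms by (simp_all add: nrm ar INVs INVz PMS)
  hence "Cmp (Mu (Mn (Mn ?a (Sg ?b)) (P ?m)) (Sg (Mn ?b (Sg ?a)))) (Pr (Idp G) m) = Cmp (Mu (Mn (Mu (Mn ?a ?m) (Sg ?b)) (Ng ?m)) (Sg (Mn ?b (Sg ?a)))) (Pr (Idp G) m)" by simp
  thus ?thesis using assms by (simp add: nrm)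
qed



abbreviation "xv \<equiv> Lp NN NN"
abbreviation "yv \<equiv> Rp NN NN"
definition "Dm = Pr (Mn xv (Sg yv)) (Mn yv (Sg xv))"
lemma Dm_ty[simp]: "hom Dm (Prod NN NN) (Prod NN NN)" by (simp add: Dm_def)

lemma inv_el: assumes F: "hom F (Prod NN NN) B" and hi: "Cmp F (Pr (S xv) (S yv)) = F"
  and a: "hom a G NN" and b: "hom b G NN"
  shows "Cmp F (Pr (S a) (S b)) = Cmp F (Pr a b)"
proof -
  have "Cmp (Cmp F (Pr (S xv) (S yv))) (Pr a b) = Cmp F (Pr a b)" using hi by simp
  thus ?thesis using F a b by (simp add: nrm)
qed

lemma D1: assumes F: "hom F (Prod NN NN) B" and hi: "Cmp F (Pr (S xv) (S yv)) = F"
  shows "Cmp F Dm = F"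
proof -
  have s1: "Cmp F (Pr (P xv) (Mn (S yv) (Sg xv))) = Cmp F (Pr xv (S yv))"
    apply (rule cases2[where B=B])
    using F hi by (simp_all add: nrm ar)
  show ?thesis
    apply (rule cases_lem[where G=NN and B=B])
    using F s1 by (simp_all add: nrm ar zero_mon Dm_def)
qed

lemma D1e: assumes F: "hom F (Prod NN NN) B" and hi: "Cmp F (Pr (S xv) (S yv)) = F"
  and a: "hom a G NN" and b: "hom b G NN"
  shows "Cmp F (Pr (Mn a (Sg b)) (Mn b (Sg a))) = Cmp F (Pr a b)"
proof -
  have "Cmp (Cmp F Dm) (Pr a b) = Cmp F (Pr a b)" using D1[OF F hi] by simp
  thus ?thesis using F a b by (simp add: nrm Dm_def)
qed

lemma D2: assumes F: "hom F (Prod NN NN) B" and hi: "Cmp F (Pr (S xv) (S yv)) = F"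
  shows "Cmp F (It Dm) = Cmp F (Lp (Prod NN NN) NN)"
  apply (rule ind[where G="Prod NN NN" and B=B and St="Rp (Prod (Prod NN NN) NN) B"])
  using F apply (simp_all add: nrm it0 itS)
  using F by (simp add: Dm_def nrm D1e[OF F hi])


abbreviation "C2 \<equiv> Prod NN NN"
abbreviation "qq \<equiv> Cmp (It Dm) (Pr (Idp C2) xv)"

lemma D3: "Mu (Cmp xv qq) (Sg (Cmp yv qq)) = Z C2"
proof -
  let ?x = "Cmp xv (Lp C2 NN)" and ?t = "Rp C2 NN" and ?a = "Cmp xv (It Dm)" and ?b = "Cmp yv (It Dm)"
  let ?w = "Lp (Prod C2 NN) NN" and ?v = "Rp (Prod C2 NN) NN"
  have "Mu (Mn ?a (Mn ?x ?t)) (Sg ?b) = Z (Prod C2 NN)"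
    apply (rule ind[where G=C2 and B=NN and St="Mu (Mn ?v (Ng (Cmp (Mn ?x ?t) ?w))) (Sg (Cmp (Mn ?b (Sg ?a)) ?w))"])
    apply (simp_all add: nrm ar it0 itS mon_self zero_mul zero_mon)
    by (simp add: Dm_def nrm INV)
  hence "Cmp (Mu (Mn ?a (Mn ?x ?t)) (Sg ?b)) (Pr (Idp C2) xv) = Cmp (Z (Prod C2 NN)) (Pr (Idp C2) xv)" by simp
  thus ?thesis by (simp add: nrm mon_self ar)
qed

definition "Nb = Pr xv (Mu yv (Ng (Mu xv (Sg yv))))"
lemma Nb_ty[simp]: "hom Nb C2 C2" by (simp add: Nb_def)

lemma D4: assumes F: "hom F C2 B" and Gm: "hom Gm C2 B"
 and hb1: "Cmp F (Pr (Idp NN) (Z NN)) = Cmp Gm (Pr (Idp NN) (Z NN))"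
 and hb2: "Cmp F (Pr (Z NN) (Idp NN)) = Cmp Gm (Pr (Z NN) (Idp NN))"
 shows "Cmp F Nb = Cmp Gm Nb"
proof -
  have hb1e: "Cmp F (Pr a (Z G)) = Cmp Gm (Pr a (Z G))" if a: "hom a G NN" for a G
  proof -
    have "Cmp (Cmp F (Pr (Idp NN) (Z NN))) a = Cmp (Cmp Gm (Pr (Idp NN) (Z NN))) a" using hb1 by simp
    thus ?thesis using a F Gm by (simp add: nrm)
  qed
  have st: "Cmp F (Pr (S xv) (Mu yv (Ng (Mu (S xv) (Sg yv))))) = Cmp Gm (Pr (S xv) (Mu yv (Ng (Mu (S xv) (Sg yv)))))"
    apply (rule cases_lem[where G=NN and B=B])
    using F Gm by (simp_all add: nrm ar hb1e zero_mul mul_one zero_add)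
  show ?thesis
    apply (rule cases2[where B=B])
    using F Gm hb2 st by (simp_all add: nrm ar Nb_def zero_mul mul_one zero_add)
qed

lemma DI:
 assumes F: "hom F C2 B" and Gm: "hom Gm C2 B"
 and hb1: "Cmp F (Pr (Idp NN) (Z NN)) = Cmp Gm (Pr (Idp NN) (Z NN))"
 and hb2: "Cmp F (Pr (Z NN) (Idp NN)) = Cmp Gm (Pr (Z NN) (Idp NN))"
 and hi1: "Cmp F (Pr (S xv) (S yv)) = F"
 and hi2: "Cmp Gm (Pr (S xv) (S yv)) = Gm"
 shows "F = Gm"
proof -
  have e1: "Cmp F qq = F"
  proof -
    have "Cmp (Cmp F (It Dm)) (Pr (Idp C2) xv) = Cmp (Cmp F (Lp C2 NN)) (Pr (Idp C2) xv)" using D2[OF F hi1] by simp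
    thus ?thesis using F by (simp add: nrm)
  qed
  have e2: "Cmp Gm qq = Gm"
  proof -
    have "Cmp (Cmp Gm (It Dm)) (Pr (Idp C2) xv) = Cmp (Cmp Gm (Lp C2 NN)) (Pr (Idp C2) xv)" using D2[OF Gm hi2] by simp
    thus ?thesis using Gm by (simp add: nrm)
  qed
  have e3: "Cmp Nb qq = qq"
    unfolding Nb_def using D3 by (simp add: nrm ar mul_one zero_add)
  have "F = Cmp F (Cmp Nb qq)" using e1 e3 by simp
  also have "\<dots> = Cmp (Cmp F Nb) qq" using F by (simp add: m_assoc)
  also have "\<dots> = Cmp (Cmp Gm Nb) qq" using D4[OF F Gm hb1 hb2] by simp
  also have "\<dots> = Cmp Gm (Cmp Nb qq)" using Gm by (simp add: m_assoc)
  also have "\<dots> = Gm" using e2 e3 by simp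
  finally show ?thesis .
qed



lemma aL: assumes x: "hom x G NN" and y: "hom y G NN"
  shows "Mn (S y) x = Pl (Mn y x) (Ng (Mn x y))"
proof -
  have "Mn (S yv) xv = Pl (Mn yv xv) (Ng (Mn xv yv))"
    apply (rule DI[where B=NN])
    by (simp_all add: nrm ar one_mon zero_mon zero_add monSS del: monS)
  hence "Cmp (Mn (S yv) xv) (Pr x y) = Cmp (Pl (Mn yv xv) (Ng (Mn xv yv))) (Pr x y)" by simp
  thus ?thesis using x y by (simp add: nrm)
qed

lemma MAX: assumes x: "hom x G NN" and y: "hom y G NN"
  shows "Pl y (Mn x y) = Pl x (Mn y x)"
proof -
  let ?x = "Cmp x (Lp G NN)" and ?n = "Rp G NN" and ?w = "Lp (Prod G NN) NN" and ?v = "Rp (Prod G NN) NN"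
  have "Pl ?n (Mn ?x ?n) = Pl ?x (Mn ?n ?x)"
    apply (rule ind[where G=G and B=NN and St="Pl ?v (Ng (Cmp (Mn ?x ?n) ?w))"])
    using x by (simp_all add: nrm ar zero_add zero_mon succ_add add_assoc spred aL)
  hence "Cmp (Pl ?n (Mn ?x ?n)) (Pr (Idp G) y) = Cmp (Pl ?x (Mn ?n ?x)) (Pr (Idp G) y)" by simp
  thus ?thesis using x y by (simp add: nrm)
qed


definition "andp = Cmp (Cmp negp negp) multp"
definition "leqp = Cmp negp monp"

fun EQ :: "obj \<Rightarrow> pm" where
  "EQ One = Cmp (Cmp Sc Zr) (Trm (Prod One One))"
| "EQ NN = Cmp andp (Pr leqp (Cmp leqp (Pr (Rp NN NN) (Lp NN NN))))"
| "EQ (Prod A B) = Cmp andp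
       (Pr (Cmp (EQ A) (Pr (Cmp (Lp A B) (Lp (Prod A B) (Prod A B)))
                                    (Cmp (Lp A B) (Rp (Prod A B) (Prod A B)))))
           (Cmp (EQ B) (Pr (Cmp (Rp A B) (Lp (Prod A B) (Prod A B)))
                                    (Cmp (Rp A B) (Rp (Prod A B) (Prod A B))))))"

lemma EQ_ty[simp]: "hom (EQ B) (Prod B B) NN"
  by (induction B) (simp_all add: andp_def leqp_def)

lemmas abs_eqs = Idp.abs_eq[symmetric] Cmp.abs_eq[symmetric] Trm.abs_eq[symmetric] Zr.abs_eq[symmetric]
  Sc.abs_eq[symmetric] Lp.abs_eq[symmetric] Rp.abs_eq[symmetric] Pr.abs_eq[symmetric] It.abs_eq[symmetric]

lemma abs_consts: "abs_pm predm = predp" "abs_pm monus = monp" "abs_pm addm = addp" "abs_pm multm = multp" "abs_pm negm = negp"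
  by (simp_all add: abs_eqs predm_def predp_def phi_def monus_def monp_def addm_def addp_def multm_def multp_def psi_def negm_def negp_def one_def)

lemma abs_eqpred: "abs_pm (eqpred B) = EQ B"
  by (induction B) (simp_all add: abs_eqs abs_consts trueA_def one_def andm_def andp_def signm_def leqm_def leqp_def eqNm_def)

lemma EQ_One: "hom x G One \<Longrightarrow> hom y G One \<Longrightarrow> Cmp (EQ One) (Pr x y) = S (Z G)"
  by (simp add: nrm)
lemma EQ_NN: "hom x G NN \<Longrightarrow> hom y G NN \<Longrightarrow> Cmp (EQ NN) (Pr x y) = Sg (Mu (Ng (Mn x y)) (Ng (Mn y x)))"
  by (simp add: nrm andp_def leqp_def)
lemma EQ_Prod: "hom x G (Prod A B) \<Longrightarrow> hom y G (Prod A B) \<Longrightarrow> Cmp (EQ (Prod A B)) (Pr x y) =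
   Sg (Mu (Cmp (EQ A) (Pr (Cmp (Lp A B) x) (Cmp (Lp A B) y))) (Cmp (EQ B) (Pr (Cmp (Rp A B) x) (Cmp (Rp A B) y))))"
  by (simp add: nrm andp_def del: EQ.simps(1,2)) 

declare EQ.simps[simp del]

lemma EQ_bool: assumes "hom x G B" "hom y G B" shows "Sg (Cmp (EQ B) (Pr x y)) = Cmp (EQ B) (Pr x y)"
proof (cases B)
  case One thus ?thesis using assms by (simp add: EQ_One ar)
next
  case NN thus ?thesis using assms by (simp add: EQ_NN NNN)
next
  case (Prod B1 B2) thus ?thesis using assms by (simp add: EQ_Prod NNN)
qed

lemma mainpm: "hom f A B \<Longrightarrow> hom g A B \<Longrightarrow> Cmp (EQ B) (Pr f g) = S (Z A) \<Longrightarrow> f = g"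
proof (induction B arbitrary: A f g)
  case One
  then show ?case using n_trm[of f] n_trm[of g] by simp
next
  case NN
  let ?u = "Mn f g" and ?v = "Mn g f"
  have fg: "hom f A NN" "hom g A NN" using NN by auto
  have h: "Sg (Mu (Ng ?u) (Ng ?v)) = S (Z A)" using NN EQ_NN[OF fg] by simp
  have "Mu (Ng ?u) (Sg (Mu (Ng ?u) (Ng ?v))) = Sg (Mu (Ng ?u) (Ng ?v))" using fg by (intro BM) auto
  hence hu: "Ng ?u = S (Z A)" using h fg by (simp add: mul_one)
  have "Mu ?u (Sg ?u) = ?u" using fg by (intro UU) auto
  hence u0: "?u = Z A" using hu fg by (simp add: ar)
  have "Sg (Ng ?v) = S (Z A)" using h hu fg by (simp add: one_mul)
  hence hv: "Ng ?v = S (Z A)" using fg by (simp add: NNN)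
  have "Mu ?v (Sg ?v) = ?v" using fg by (intro UU) auto
  hence v0: "?v = Z A" using hv fg by (simp add: ar)
  have "Pl g ?u = Pl f ?v" using fg by (intro MAX) auto
  thus ?case using u0 v0 fg by (simp add: ar)
next
  case (Prod B1 B2)
  let ?p = "Cmp (EQ B1) (Pr (Cmp (Lp B1 B2) f) (Cmp (Lp B1 B2) g))"
  let ?q = "Cmp (EQ B2) (Pr (Cmp (Rp B1 B2) f) (Cmp (Rp B1 B2) g))"
  have fg: "hom f A (Prod B1 B2)" "hom g A (Prod B1 B2)" using Prod by auto
  have h: "Sg (Mu ?p ?q) = S (Z A)" using Prod.prems EQ_Prod[OF fg] by simp
  have bp: "Sg ?p = ?p" using fg by (intro EQ_bool) auto
  have bq: "Sg ?q = ?q" using fg by (intro EQ_bool) auto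
  have "Mu (Ng (Ng ?p)) (Sg (Mu (Ng (Ng ?p)) ?q)) = Sg (Mu (Ng (Ng ?p)) ?q)" using fg by (intro BM) auto
  hence hp: "?p = S (Z A)" using h bp fg by (simp add: mul_one)
  have "Sg ?q = S (Z A)" using h hp fg by (simp add: one_mul)
  hence hq: "?q = S (Z A)" using bq by simp
  have l: "Cmp (Lp B1 B2) f = Cmp (Lp B1 B2) g" using Prod.IH(1)[OF _ _ hp] fg by simp
  have r: "Cmp (Rp B1 B2) f = Cmp (Rp B1 B2) g" using Prod.IH(2)[OF _ _ hq] fg by simp
  have "f = Pr (Cmp (Lp B1 B2) f) (Cmp (Rp B1 B2) f)" using fg by (simp add: m_surjc)
  also have "\<dots> = Pr (Cmp (Lp B1 B2) g) (Cmp (Rp B1 B2) g)" using l r by simp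
  also have "\<dots> = g" using fg by (simp add: m_surjc)
  finally show ?case .
qed


theorem mainTheorem2:
  assumes "typed f A B" and "typed g A B"
    and "eqv (trueA A) (Comp (Comp (eqpred B) (times f g A A)) (Delta A)) A NN"
  shows "eqv f g A B"
proof -
  have tf: "wt f" "dm f = A" "cd f = B" and tg: "wt g" "dm g = A" "cd g = B"
    using assms(1,2) by (auto simp: typed_iff)
  define fp where "fp = abs_pm f"
  define gp where "gp = abs_pm g"
  have hf: "hom fp A B" using tf unfolding fp_def by (simp add: pwt.abs_eq pdom.abs_eq pcod.abs_eq)
  have hg: "hom gp A B" using tg unfolding gp_def by (simp add: pwt.abs_eq pdom.abs_eq pcod.abs_eq)
  have "rel (trueA A) (Comp (Comp (eqpred B) (times f g A A)) (Delta A))"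
    using assms(3) eqv_typed[OF assms(3)] unfolding rel_def typed_iff by auto
  hence e: "abs_pm (trueA A) = abs_pm (Comp (Comp (eqpred B) (times f g A A)) (Delta A))"
    by (simp add: pm_eq_iff)
  have e1: "abs_pm (trueA A) = S (Z A)" by (simp add: abs_eqs trueA_def one_def nrm)
  have "abs_pm (Comp (Comp (eqpred B) (times f g A A)) (Delta A)) = Cmp (Cmp (EQ B) (Pr (Cmp fp (Lp A A)) (Cmp gp (Rp A A)))) (Pr (Idp A) (Idp A))"
    unfolding fp_def gp_def by (simp add: abs_eqs abs_eqpred times_def Delta_def)
  also have "\<dots> = Cmp (EQ B) (Pr fp gp)" using hf hg by (simp add: nrm)
  finally have "Cmp (EQ B) (Pr fp gp) = S (Z A)" using e e1 by simp
  hence "fp = gp" by (rule mainpm[OF hf hg])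
  hence "rel f g" by (simp add: fp_def gp_def pm_eq_iff)
  thus ?thesis using tf unfolding rel_def by auto
qed

end
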